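(* Let $\mathcal L$ be a finite atomic lattice with atoms $A_1,\dots,A_n$ and $\mathcal G$ a building set in $\mathcal L$. Then the polyhedral fan $\Sigma(\mathcal L,\mathcal G)=\{V(\mathcal S):\mathcal S \text{ nested in }\mathcal G\}$ in $\mathbb R^n$ is unimodular, i.e. for every nested set $\mathcal S$ the set $\{v_X: X\in\mathcal S\}$ can be extended to a basis of the lattice $\mathbb Z^n$.
   Context: A lattice is a finite poset in which every subset has a join $\vee$ and a meet; $\hat0$ is its least element; atomic means every element is a join of atoms. For $X\le Y$ write $[X,Y]=\{Z:X\le Z\le Y\}$ and $\mathcal G_{\le X}=\{G\in\mathcal G:G\le X\}$. A subset $\mathcal G\subseteq\mathcal L\setminus\{\hat0\}$ is a building set if for every $X\ne\hat0$, with $\{G_1,\dots,G_k\}$ the maximal elements of $\mathcal G_{\le X}$, there is a poset isomorphism $\prod_{i=1}^k[\hat0,G_i]\to[\hat0,X]$ sending $(\hat0,\dots,G_i,\dots,\hat0)$ to $G_i$. A subset $\mathcal S\subseteq\mathcal G$ is nested if for every set of pairwise incomparable $G_1,\dots,G_t\in\mathcal S$, $t\ge2$, $G_1\vee\dots\vee G_t\notin\mathcal G$. For $X\in\mathcal L$, $v_X\in\mathbb R^n$ is the vector with $i$-th coordinate $1$ if $A_i\le X$ and $0$ otherwise; for $\mathcal S\subseteq\mathcal L$, $V(\mathcal S)$ is the cone spanned by $\{v_X:X\in\mathcal S\}$. *)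

theory Defs
  imports Main
begin

text \<open>The finite lattice is modelled as a finite type of class complete_lattice
  (every finite nonempty lattice is complete); bot is the least element.\<close>

definition is_atom :: "'a::complete_lattice \<Rightarrow> bool" where
  "is_atom a \<longleftrightarrow> bot < a \<and> \<not> (\<exists>z. bot < z \<and> z < a)"

definition atomic_lattice :: "'a::complete_lattice itself \<Rightarrow> bool" where
  "atomic_lattice _ \<longleftrightarrow> (\<forall>X::'a. X = Sup {a. is_atom a \<and> a \<le> X})"

definition maximal_below :: "'a::complete_lattice set \<Rightarrow> 'a \<Rightarrow> 'a set" where
  "maximal_below G X = {g \<in> G. g \<le> X \<and> \<not> (\<exists>h\<in>G. h \<le> X \<and> g < h)}"

text \<open>Product of intervals [bot, g], g in M, as functions M -> 'a (bot outside M),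
  ordered componentwise.\<close>
definition interval_product :: "'a::complete_lattice set \<Rightarrow> ('a \<Rightarrow> 'a) set" where
  "interval_product M = {t. (\<forall>g\<in>M. t g \<le> g) \<and> (\<forall>g. g \<notin> M \<longrightarrow> t g = bot)}"

definition building_set :: "'a::complete_lattice set \<Rightarrow> bool" where
  "building_set G \<longleftrightarrow> bot \<notin> G \<and>
     (\<forall>X. X \<noteq> bot \<longrightarrow>
        (\<exists>f. bij_betw f (interval_product (maximal_below G X)) {Z. bot \<le> Z \<and> Z \<le> X}
           \<and> (\<forall>s\<in>interval_product (maximal_below G X). \<forall>t\<in>interval_product (maximal_below G X).
                 s \<le> t \<longleftrightarrow> f s \<le> f t)
           \<and> (\<forall>g\<in>maximal_below G X. f ((\<lambda>_. bot)(g := g)) = g)))"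

definition nested :: "'a::complete_lattice set \<Rightarrow> 'a set \<Rightarrow> bool" where
  "nested G S \<longleftrightarrow> S \<subseteq> G \<and>
     (\<forall>T \<subseteq> S. 2 \<le> card T \<and> (\<forall>x\<in>T. \<forall>y\<in>T. x \<noteq> y \<longrightarrow> \<not> x \<le> y)
        \<longrightarrow> Sup T \<notin> G)"

text \<open>v_X in Z^n (vectors are nat => int, zero at indices >= n); A enumerates the atoms
  as A 0, ..., A (n-1).\<close>
definition vvec :: "(nat \<Rightarrow> 'a::complete_lattice) \<Rightarrow> nat \<Rightarrow> 'a \<Rightarrow> nat \<Rightarrow> int" where
  "vvec A n X = (\<lambda>i. if i < n \<and> A i \<le> X then 1 else 0)"

definition zvec :: "nat \<Rightarrow> (nat \<Rightarrow> int) set" where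
  "zvec n = {w. \<forall>i\<ge>n. w i = 0}"

definition zbasis :: "nat \<Rightarrow> (nat \<Rightarrow> int) set \<Rightarrow> bool" where
  "zbasis n B \<longleftrightarrow> finite B \<and> B \<subseteq> zvec n \<and>
     (\<forall>c. (\<forall>i. (\<Sum>b\<in>B. c b * b i) = 0) \<longrightarrow> (\<forall>b\<in>B. c b = 0)) \<and>
     (\<forall>w\<in>zvec n. \<exists>c. w = (\<lambda>i. \<Sum>b\<in>B. c b * b i))"

end

theory Submission imports Defs begin
lemma unitri:
  fixes u :: "nat \<Rightarrow> nat \<Rightarrow> int" and r :: "nat \<Rightarrow> nat" and n :: nat
  assumes zv: "\<And>i k. i < n \<Longrightarrow> n \<le> k \<Longrightarrow> u i k = 0"
    and diag: "\<And>i. i < n \<Longrightarrow> u i i = 1"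
    and tri: "\<And>i j. i < n \<Longrightarrow> j < n \<Longrightarrow> j \<noteq> i \<Longrightarrow> u i j \<noteq> 0 \<Longrightarrow> r j < r i"
  shows "zbasis n (u ` {..<n})"
proof -
  have inj: "inj_on u {..<n}"
  proof (rule inj_onI)
    fix i j assume i: "i \<in> {..<n}" and j: "j \<in> {..<n}" and e: "u i = u j"
    show "i = j"
    proof (rule ccontr)
      assume ne: "i \<noteq> j"
      have "u j i \<noteq> 0" using diag i e by (metis lessThan_iff zero_neq_one)
      hence "r i < r j" using tri i j ne by auto
      moreover have "u i j \<noteq> 0" using diag j e by (metis lessThan_iff zero_neq_one)
      hence "r j < r i" using tri i j ne by auto
      ultimately show False by simp
    qed
  qed
  have reidx: "\<And>c l. (\<Sum>b\<in>u ` {..<n}. c b * b l) = (\<Sum>i<n. c (u i) * u i l)"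
    using sum.reindex[OF inj] by simp
  have indep: "\<forall>c. (\<forall>l. (\<Sum>b\<in>u ` {..<n}. c b * b l) = 0) \<longrightarrow> (\<forall>b\<in>u ` {..<n}. c b = 0)"
  proof (intro allI impI)
    fix c :: "(nat \<Rightarrow> int) \<Rightarrow> int"
    assume h: "\<forall>l. (\<Sum>b\<in>u ` {..<n}. c b * b l) = 0"
    define d where "d i = c (u i)" for i
    have h2: "(\<Sum>i<n. d i * u i l) = 0" for l using h reidx d_def by simp
    have "\<forall>i<n. d i = 0"
    proof (rule ccontr)
      assume "\<not> (\<forall>i<n. d i = 0)"
      define D where "D = {i. i < n \<and> d i \<noteq> 0}"
      have Dne: "D \<noteq> {}" using \<open>\<not> (\<forall>i<n. d i = 0)\<close> D_def by auto
      have fD: "finite D" by (simp add: D_def)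
      obtain i where iD: "i \<in> D" and imax: "r i = Max (r ` D)"
        using Dne fD by (metis (mono_tags, lifting) Max_in finite_imageI image_iff image_is_empty)
      have mx: "\<And>j. j \<in> D \<Longrightarrow> r j \<le> r i" using imax fD by simp
      have "(\<Sum>j<n. d j * u j i) = d i * u i i + (\<Sum>j\<in>{..<n} - {i}. d j * u j i)"
        using iD D_def sum.remove[OF finite_lessThan, of i n "\<lambda>j. d j * u j i"] by simp
      also have "(\<Sum>j\<in>{..<n} - {i}. d j * u j i) = 0"
      proof (rule sum.neutral, rule ballI)
        fix j assume j: "j \<in> {..<n} - {i}"
        show "d j * u j i = 0"
        proof (rule ccontr)
          assume "d j * u j i \<noteq> 0"
          hence "d j \<noteq> 0" "u j i \<noteq> 0" by auto
          hence "r i < r j" using tri j iD D_def by auto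
          moreover have "j \<in> D" using j \<open>d j \<noteq> 0\<close> D_def by auto
          ultimately show False using mx by fastforce
        qed
      qed
      finally have "d i = 0" using h2 diag iD D_def by simp
      thus False using iD D_def by simp
    qed
    thus "\<forall>b\<in>u ` {..<n}. c b = 0" using d_def by auto
  qed
  have span_e: "\<forall>k. r k = m \<longrightarrow> k < n \<longrightarrow> (\<exists>d. (\<lambda>l. if l = k then 1 else 0) = (\<lambda>l. \<Sum>i<n. d i * u i l))" for m
  proof (induction m rule: less_induct)
    case (less m)
    show ?case
    proof (intro allI impI)
      fix k assume rk: "r k = m" and kn: "k < n"
      define J where "J = {j. j < n \<and> j \<noteq> k \<and> u k j \<noteq> 0}"
      have fJ: "finite J" by (simp add: J_def)
      have "\<forall>j\<in>J. \<exists>d. (\<lambda>l. if l = j then 1 else 0) = (\<lambda>l. \<Sum>i<n. d i * u i l)"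
        using less.IH tri rk kn J_def by auto
      then obtain D where D: "\<forall>j\<in>J. (\<lambda>l. if l = j then (1::int) else 0) = (\<lambda>l. \<Sum>i<n. D j i * u i l)"
        by metis
      define d where "d i = (if i = k then 1 else 0) - (\<Sum>j\<in>J. u k j * D j i)" for i
      show "\<exists>d. (\<lambda>l. if l = k then 1 else 0) = (\<lambda>l. \<Sum>i<n. d i * u i l)"
      proof (rule exI[of _ d], rule ext)
        fix l
        have "(\<Sum>i<n. d i * u i l) = (\<Sum>i<n. (if i = k then u i l else 0)) - (\<Sum>i<n. \<Sum>j\<in>J. u k j * D j i * u i l)"
        proof -
          have "\<And>i. d i * u i l = (if i = k then u i l else 0) - (\<Sum>j\<in>J. u k j * D j i * u i l)"
            by (simp add: d_def left_diff_distrib sum_distrib_right)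
          then show ?thesis by (simp add: sum_subtractf)
        qed
        also have "(\<Sum>i<n. (if i = k then u i l else 0)) = u k l" using kn by simp
        also have "(\<Sum>i<n. \<Sum>j\<in>J. u k j * D j i * u i l) = (\<Sum>j\<in>J. u k j * (\<Sum>i<n. D j i * u i l))"
          by (simp add: sum.swap[of _ J] sum_distrib_left mult.assoc)
        also have "\<dots> = (\<Sum>j\<in>J. u k j * (if l = j then 1 else 0))"
        proof (rule sum.cong[OF refl])
          fix j assume "j \<in> J"
          then show "u k j * (\<Sum>i<n. D j i * u i l) = u k j * (if l = j then 1 else 0)"
            using D by (metis (mono_tags, lifting))
        qed
        also have "\<dots> = (if l \<in> J then u k l else 0)"
        proof -
          have "\<And>j. u k j * (if l = j then 1 else 0) = (if j = l then u k j else 0)" by simp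
          then show ?thesis using fJ by (simp add: sum.delta')
        qed
        finally have eq: "(\<Sum>i<n. d i * u i l) = u k l - (if l \<in> J then u k l else 0)" .
        show "(if l = k then 1 else 0) = (\<Sum>i<n. d i * u i l)"
          unfolding eq using diag kn zv J_def by (cases "l < n") auto
      qed
    qed
  qed
  have span: "\<forall>w\<in>zvec n. \<exists>c. w = (\<lambda>l. \<Sum>b\<in>u ` {..<n}. c b * b l)"
  proof
    fix w assume w: "w \<in> zvec n"
    have "\<forall>k<n. \<exists>d. (\<lambda>l. if l = k then 1 else 0) = (\<lambda>l. \<Sum>i<n. d i * u i l)"
      using span_e by blast
    then obtain E where E: "\<forall>k<n. (\<lambda>l. if l = k then (1::int) else 0) = (\<lambda>l. \<Sum>i<n. E k i * u i l)"
      by (metis (no_types))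
    define d where "d i = (\<Sum>k<n. w k * E k i)" for i
    have dd: "w = (\<lambda>l. \<Sum>i<n. d i * u i l)"
    proof
      fix l
      have "(\<Sum>i<n. d i * u i l) = (\<Sum>k<n. w k * (\<Sum>i<n. E k i * u i l))"
      proof -
        have "(\<Sum>i<n. d i * u i l) = (\<Sum>i<n. \<Sum>k<n. w k * (E k i * u i l))"
          by (simp add: d_def sum_distrib_right mult.assoc)
        also have "\<dots> = (\<Sum>k<n. \<Sum>i<n. w k * (E k i * u i l))"
          by (rule sum.swap)
        also have "\<dots> = (\<Sum>k<n. w k * (\<Sum>i<n. E k i * u i l))"
          by (simp add: sum_distrib_left)
        finally show ?thesis .
      qed
      also have "\<dots> = (\<Sum>k<n. w k * (if l = k then 1 else 0))"
      proof (rule sum.cong[OF refl])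
        fix k assume "k \<in> {..<n}"
        then show "w k * (\<Sum>i<n. E k i * u i l) = w k * (if l = k then 1 else 0)"
          using E by (metis (mono_tags, lifting) lessThan_iff)
      qed
      also have "\<dots> = (if l < n then w l else 0)"
      proof -
        have "\<And>k. w k * (if l = k then 1 else 0) = (if k = l then w k else 0)" by simp
        then show ?thesis by (simp add: sum.delta')
      qed
      also have "\<dots> = w l" using w by (simp add: zvec_def)
      finally show "w l = (\<Sum>i<n. d i * u i l)" by simp
    qed
    show "\<exists>c. w = (\<lambda>l. \<Sum>b\<in>u ` {..<n}. c b * b l)"
    proof (rule exI[of _ "\<lambda>b. d (inv_into {..<n} u b)"])
      show "w = (\<lambda>l. \<Sum>b\<in>u ` {..<n}. d (inv_into {..<n} u b) * b l)"
        unfolding reidx using inv_into_f_f[OF inj] dd by simp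
    qed
  qed
  have sub: "u ` {..<n} \<subseteq> zvec n" using zv by (auto simp: zvec_def)
  show ?thesis unfolding zbasis_def using indep span sub by blast
qed

lemma nested_disjoint:
  fixes G S :: "'a::{complete_lattice,finite} set"
  assumes bs: "building_set G" and ns: "nested G S" and g1: "G1 \<in> S" and g2: "G2 \<in> S"
    and a: "is_atom a" "a \<le> G1" "a \<le> G2"
  shows "G1 \<le> G2 \<or> G2 \<le> G1"
proof (rule ccontr)
  assume nc: "\<not> (G1 \<le> G2 \<or> G2 \<le> G1)"
  define X where "X = sup G1 G2"
  have SG: "S \<subseteq> G" using ns nested_def by auto
  have bot: "bot \<notin> G" using bs building_set_def by auto
  have "G1 \<noteq> bot" using g1 SG bot by auto
  hence Xnb: "X \<noteq> bot" by (simp add: X_def)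
  define M where "M = maximal_below G X"
  from bs Xnb obtain f where fb: "bij_betw f (interval_product M) {Z. bot \<le> Z \<and> Z \<le> X}"
    and fo: "\<forall>s\<in>interval_product M. \<forall>t\<in>interval_product M. s \<le> t \<longleftrightarrow> f s \<le> f t"
    and fu: "\<forall>g\<in>M. f ((\<lambda>_. bot)(g := g)) = g"
    unfolding building_set_def M_def by blast
  have ne: "G1 \<noteq> G2" using nc by auto
  have XnG: "X \<notin> G"
  proof -
    have "{G1, G2} \<subseteq> S" using g1 g2 by auto
    moreover have "2 \<le> card {G1, G2}" using ne by simp
    moreover have "\<forall>x\<in>{G1,G2}. \<forall>y\<in>{G1,G2}. x \<noteq> y \<longrightarrow> \<not> x \<le> y" using nc by auto
    ultimately have "Sup {G1, G2} \<notin> G" using ns unfolding nested_def by blast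
    thus ?thesis by (simp add: X_def)
  qed
  have ex: "\<exists>h\<in>M. Y \<le> h" if "Y \<in> G" "Y \<le> X" for Y
  proof -
    have "finite {g\<in>G. g \<le> X}" by simp
    from finite_has_maximal2[OF this, of Y] that obtain m where
      m: "m \<in> {g\<in>G. g \<le> X}" "Y \<le> m" "\<forall>b\<in>{g\<in>G. g \<le> X}. m \<le> b \<longrightarrow> m = b" by auto
    have "m \<in> M" unfolding M_def maximal_below_def using m by (auto simp: less_le)
    thus ?thesis using m by auto
  qed
  obtain h1 where h1: "h1 \<in> M" "G1 \<le> h1" using ex[of G1] g1 SG unfolding X_def by auto
  obtain h2 where h2: "h2 \<in> M" "G2 \<le> h2" using ex[of G2] g2 SG unfolding X_def by auto
  have hne: "h1 \<noteq> h2"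
  proof
    assume "h1 = h2"
    hence "X \<le> h1" using h1 h2 X_def by simp
    moreover have "h1 \<le> X" "h1 \<in> G" using h1 unfolding M_def maximal_below_def by auto
    ultimately show False using XnG by (metis order.antisym)
  qed
  have aX: "a \<in> {Z. bot \<le> Z \<and> Z \<le> X}" using a X_def by (auto intro: le_supI1)
  then obtain t where t: "t \<in> interval_product M" "f t = a"
    using fb unfolding bij_betw_def by (metis imageE)
  have unit: "(\<lambda>_. bot)(h := h) \<in> interval_product M" if "h \<in> M" for h
    using that unfolding interval_product_def by auto
  have "t \<le> (\<lambda>_. bot)(h1 := h1)"
    using fo t unit[OF h1(1)] fu h1 a by (metis order.trans)
  moreover have "t \<le> (\<lambda>_. bot)(h2 := h2)"
    using fo t unit[OF h2(1)] fu h2 a by (metis order.trans)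
  ultimately have tb: "\<And>g. t g \<le> bot" using hne unfolding le_fun_def
    by (metis fun_upd_other)
  have "bot \<in> {Z. bot \<le> Z \<and> Z \<le> X}" by simp
  then obtain s where s: "s \<in> interval_product M" "f s = bot"
    using fb unfolding bij_betw_def by (metis imageE)
  have "t \<le> s" using tb unfolding le_fun_def by (metis bot.extremum_uniqueI bot_least)
  hence "a \<le> bot" using fo t s by auto
  thus False using a unfolding is_atom_def by auto
qed

lemma private_atom:
  fixes G S :: "'a::{complete_lattice,finite} set"
  assumes at: "atomic_lattice TYPE('a)" and ns: "nested G S" and bot: "bot \<notin> G" and Y: "Y \<in> S"
  shows "\<exists>a. is_atom a \<and> a \<le> Y \<and> (\<forall>X\<in>S. X < Y \<longrightarrow> \<not> a \<le> X)"
proof (rule ccontr)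
  assume H: "\<not> ?thesis"
  have SG: "S \<subseteq> G" using ns nested_def by auto
  define L where "L = {X\<in>S. X < Y}"
  define T where "T = {X\<in>L. \<forall>Z\<in>L. X \<le> Z \<longrightarrow> X = Z}"
  have cov: "\<exists>m\<in>T. X \<le> m" if "X \<in> L" for X
  proof -
    have "finite L" by simp
    from finite_has_maximal2[OF this that] show ?thesis unfolding T_def by auto
  qed
  have "Y = Sup {a. is_atom a \<and> a \<le> Y}" using at unfolding atomic_lattice_def by blast
  also have "\<dots> \<le> Sup T"
  proof (rule Sup_least)
    fix a assume "a \<in> {a. is_atom a \<and> a \<le> Y}"
    then obtain X where "X \<in> S" "X < Y" "a \<le> X" using H by auto
    then obtain m where "m \<in> T" "X \<le> m" using cov L_def by auto
    thus "a \<le> Sup T" using \<open>a \<le> X\<close> by (meson Sup_upper order.trans)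
  qed
  finally have Y1: "Y \<le> Sup T" .
  have "Sup T \<le> Y" by (rule Sup_least) (auto simp: T_def L_def)
  hence SY: "Sup T = Y" using Y1 by simp
  have anti: "\<forall>x\<in>T. \<forall>y\<in>T. x \<noteq> y \<longrightarrow> \<not> x \<le> y" unfolding T_def by blast
  have fT: "finite T" by simp
  have TS: "T \<subseteq> S" unfolding T_def L_def by auto
  show False
  proof (cases "2 \<le> card T")
    case True
    then have "Sup T \<notin> G" using ns anti TS unfolding nested_def by blast
    then show False using SY Y SG by auto
  next
    case False
    then have "card T = 0 \<or> card T = 1" by linarith
    then show False
    proof
      assume "card T = 0"
      then have "T = {}" using fT by simp
      then show False using SY Y SG bot by auto
    next
      assume "card T = 1"
      then obtain x where "T = {x}" by (meson card_1_singletonE)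
      then show False using SY T_def L_def by auto
    qed
  qed
qed

theorem proposition5p1:
  fixes A :: "nat \<Rightarrow> 'a::{complete_lattice, finite}" and n :: nat
    and G S :: "'a set"
  assumes "atomic_lattice TYPE('a)"
    and "bij_betw A {..<n} {a. is_atom a}"
    and "building_set G"
    and "nested G S"
  shows "\<exists>B. zbasis n B \<and> vvec A n ` S \<subseteq> B"
proof -
  note at = assms(1) and bA = assms(2) and bs = assms(3) and ns = assms(4)
  have SG: "S \<subseteq> G" using ns nested_def by auto
  have botG: "bot \<notin> G" using bs building_set_def by auto
  have "\<forall>Y\<in>S. \<exists>i. i < n \<and> is_atom (A i) \<and> A i \<le> Y \<and> (\<forall>X\<in>S. X < Y \<longrightarrow> \<not> A i \<le> X)"
  proof
    fix Y assume Y: "Y \<in> S"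
    obtain a where a: "is_atom a" "a \<le> Y" "\<forall>X\<in>S. X < Y \<longrightarrow> \<not> a \<le> X"
      using private_atom[OF at ns botG Y] by blast
    have "a \<in> A ` {..<n}" using bA a unfolding bij_betw_def by auto
    then obtain i where "i < n" "A i = a" by auto
    thus "\<exists>i. i < n \<and> is_atom (A i) \<and> A i \<le> Y \<and> (\<forall>X\<in>S. X < Y \<longrightarrow> \<not> A i \<le> X)"
      using a by auto
  qed
  then obtain p where p: "\<forall>Y\<in>S. p Y < n \<and> is_atom (A (p Y)) \<and> A (p Y) \<le> Y \<and> (\<forall>X\<in>S. X < Y \<longrightarrow> \<not> A (p Y) \<le> X)"
    by metis
  have cmp: "\<And>Y Y' a. Y \<in> S \<Longrightarrow> Y' \<in> S \<Longrightarrow> is_atom a \<Longrightarrow> a \<le> Y \<Longrightarrow> a \<le> Y' \<Longrightarrow> Y \<le> Y' \<or> Y' \<le> Y"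
    using nested_disjoint[OF bs ns] by blast
  have injp: "inj_on p S"
  proof (rule inj_onI)
    fix Y Y' assume Y: "Y \<in> S" and Y': "Y' \<in> S" and e: "p Y = p Y'"
    have "A (p Y) \<le> Y'" using p Y' e by metis
    hence c: "Y \<le> Y' \<or> Y' \<le> Y" using cmp[OF Y Y'] p Y by blast
    show "Y = Y'"
    proof (rule ccontr)
      assume ne: "Y \<noteq> Y'"
      show False
      proof (cases "Y \<le> Y'")
        case True
        hence "Y < Y'" using ne by simp
        thus False using p Y Y' e by metis
      next
        case False
        hence "Y' < Y" using c ne by auto
        thus False using p Y Y' e \<open>A (p Y) \<le> Y'\<close> by metis
      qed
    qed
  qed
  define q where "q = inv_into S p"
  have qp: "\<And>Y. Y \<in> S \<Longrightarrow> q (p Y) = Y" using injp q_def by simp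
  define rk where "rk Y = card {X\<in>S. X < Y}" for Y
  have rkmono: "rk X < rk Y" if "X \<in> S" "Y \<in> S" "X < Y" for X Y
  proof -
    have "{Z\<in>S. Z < X} \<subset> {Z\<in>S. Z < Y}" using that by (auto intro: less_trans)
    thus ?thesis unfolding rk_def by (simp add: psubset_card_mono)
  qed
  define u where "u i = (if i \<in> p ` S then vvec A n (q i) else (\<lambda>k. if k = i then 1 else 0))" for i
  define r where "r i = (if i \<in> p ` S then Suc (rk (q i)) else 0)" for i
  have zb: "zbasis n (u ` {..<n})"
  proof (rule unitri)
    fix i k assume "i < n" "n \<le> k"
    thus "u i k = 0" unfolding u_def vvec_def by auto
  next
    fix i assume i: "i < n"
    show "u i i = 1"
    proof (cases "i \<in> p ` S")
      case True
      then obtain Y where "Y \<in> S" "i = p Y" by auto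
      thus ?thesis using qp p i unfolding u_def vvec_def by auto
    qed (simp add: u_def)
  next
    fix i j assume i: "i < n" and j: "j < n" and ji: "j \<noteq> i" and nz: "u i j \<noteq> 0"
    show "r j < r i"
    proof (cases "i \<in> p ` S")
      case False
      thus ?thesis using nz ji unfolding u_def by auto
    next
      case True
      then obtain Y where Y: "Y \<in> S" "i = p Y" by auto
      have Aj: "A j \<le> Y" using nz Y qp True j unfolding u_def vvec_def by (auto split: if_splits)
      show ?thesis
      proof (cases "j \<in> p ` S")
        case False
        thus ?thesis using True unfolding r_def by simp
      next
        case True2: True
        then obtain Y' where Y': "Y' \<in> S" "j = p Y'" by auto
        have ne: "Y' \<noteq> Y" using Y Y' ji by auto
        have "Y \<le> Y' \<or> Y' \<le> Y" using cmp[OF Y(1) Y'(1), of "A j"] p Y' Aj by auto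
        moreover have "\<not> Y < Y'" using p Y' Y Aj by metis
        ultimately have "Y' < Y" using ne by auto
        hence "rk Y' < rk Y" using rkmono Y Y' by auto
        thus ?thesis unfolding r_def using True True2 Y Y' qp by simp
      qed
    qed
  qed
  have "vvec A n ` S \<subseteq> u ` {..<n}"
  proof
    fix v assume "v \<in> vvec A n ` S"
    then obtain Y where Y: "Y \<in> S" "v = vvec A n Y" by auto
    have "u (p Y) = v" using Y qp unfolding u_def by auto
    moreover have "p Y \<in> {..<n}" using p Y by auto
    ultimately show "v \<in> u ` {..<n}" by blast
  qed
  thus ?thesis using zb by blast
qed

end
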